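(* Let $h$ be an odd positive integer, $m=3h$, $e=3^h$. For $b\in\mathrm{GF}(3^m)^*$ let $N_{(b,0)}$ be the number of $y\in\mathrm{GF}(3^m)$ satisfying simultaneously $\mathrm{Tr}(y^{e+1}+y^2)=0$ and $\mathrm{Tr}(by^{e+1})=0$. Then for every $b\in\mathrm{GF}(3^m)^*$, $N_{(b,0)}\in\{3^{m-2},\ 3^{m-2}+2\cdot3^{2(h-1)},\ 3^{m-2}-2\cdot3^{2(h-1)}\}$.
   Context: $\mathrm{Tr}$ denotes the absolute trace from $\mathrm{GF}(3^m)$ onto $\mathrm{GF}(3)$. *)

theory Defs
  imports Main
begin

text \<open>Absolute trace from GF(3^m) onto GF(3): Tr(x) = sum_{i<m} x^(3^i).
  Its values lie in the prime subfield GF(3) of the ambient field.\<close>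
definition abs_trace3 :: "nat \<Rightarrow> 'a::field \<Rightarrow> 'a" where
  "abs_trace3 m x = (\<Sum>i<m. x ^ (3 ^ i))"

end

theory Submission
  imports Defs "HOL-Computational_Algebra.Polynomial" "HOL-Computational_Algebra.Primes"
begin

lemma dvd3_sq:
  fixes x :: int
  assumes "3 dvd x^2" shows "3 dvd x"
proof (rule ccontr)
  assume "\<not> 3 dvd x"
  hence "x mod 3 = 1 \<or> x mod 3 = 2" by presburger
  moreover have "x^2 mod 3 = ((x mod 3)^2) mod 3" by (simp add: power_mod)
  ultimately have "x^2 mod 3 \<noteq> 0" by auto
  thus False using assms by auto
qed

lemma small_sols:
  fixes u v :: int
  assumes "u^2 - u*v + v^2 \<le> 3"
  shows "\<bar>u\<bar> \<le> 2 \<and> \<bar>v\<bar> \<le> 2"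
proof -
  have "4*(u^2 - u*v + v^2) = (2*u-v)^2 + 3*v^2" by (simp add: power2_eq_square algebra_simps)
  moreover have "(2*u-v)^2 \<ge> 0" by simp
  ultimately have v: "v^2 \<le> 4" using assms by (simp only: algebra_simps)
  have "4*(u^2 - u*v + v^2) = (2*v-u)^2 + 3*u^2" by (simp add: power2_eq_square algebra_simps)
  moreover have "(2*v-u)^2 \<ge> 0" by simp
  ultimately have u: "u^2 \<le> 4" using assms by (simp only: algebra_simps)
  show ?thesis using u v abs_le_square_iff[of u 2] abs_le_square_iff[of v 2] by (simp add: power2_eq_square)
qed

lemma sol_eis:
  fixes u v :: int
  assumes "u^2 - u*v + v^2 = 3^k"
  shows "(even k \<and> (u+v = 3^(k div 2) \<or> u+v = -(3^(k div 2)) \<or> u+v = 2*3^(k div 2) \<or> u+v = -2*3^(k div 2)))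
       \<or> (odd k \<and> (u+v = 0 \<or> u+v = 3^(k div 2 + 1) \<or> u+v = -(3^(k div 2 + 1))))"
  using assms
proof (induction k arbitrary: u v rule: less_induct)
  case (less k)
  show ?case
  proof (cases "k \<le> 1")
    case True
    hence "u^2 - u*v + v^2 \<le> 3" using less.prems by (cases k) auto
    from small_sols[OF this] have "\<bar>u\<bar> \<le> 2" "\<bar>v\<bar> \<le> 2" by auto
    hence U: "u=-2 \<or> u=-1 \<or> u=0 \<or> u=1 \<or> u=2" and V: "v=-2 \<or> v=-1 \<or> v=0 \<or> v=1 \<or> v=2" by auto
    from True have "k = 0 \<or> k = 1" by auto
    then show ?thesis
    proof
      assume k: "k = 0"
      have "u^2 - u*v + v^2 = 1" using less.prems k by simp
      with U V show ?thesis unfolding k by (elim disjE) (simp_all add: power2_eq_square)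
    next
      assume k: "k = 1"
      have "u^2 - u*v + v^2 = 3" using less.prems k by simp
      with U V show ?thesis unfolding k by (elim disjE) (simp_all add: power2_eq_square)
    qed
  next
    case False
    define k' where "k' = k - 2"
    have k: "k = Suc (Suc k')" using False unfolding k'_def by simp
    have e: "(u+v)^2 = u^2 - u*v + v^2 + 3*(u*v)" by (simp add: power2_eq_square algebra_simps)
    have "(3::int) dvd 3^k" using k by simp
    hence "3 dvd (u+v)^2" unfolding e less.prems by simp
    hence "3 dvd (u+v)" by (rule dvd3_sq)
    then obtain w where w: "u+v = 3*w" by blast
    hence vw: "v = 3*w - u" by simp
    have "3*(u^2 - 3*w*u + 3*w^2) = 3 * 3^(Suc k')"
      using less.prems unfolding vw k by (simp add: power2_eq_square algebra_simps)
    hence eq: "u^2 = 3^(Suc k') + 3*(w*u - w^2)" by (simp add: algebra_simps)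
    have "3 dvd u^2" unfolding eq by simp
    hence "3 dvd u" by (rule dvd3_sq)
    then obtain u' where u': "u = 3*u'" by blast
    define v' where "v' = w - u'"
    have v': "v = 3*v'" using vw u' v'_def by simp
    have "9*(u'^2 - u'*v' + v'^2) = 9 * 3^k'"
      using less.prems unfolding u' v' k by (simp add: power2_eq_square algebra_simps)
    hence "u'^2 - u'*v' + v'^2 = 3^k'" by simp
    from less.IH[OF _ this] k have IH: "(even k' \<and> (u'+v' = 3^(k' div 2) \<or> u'+v' = -(3^(k' div 2)) \<or> u'+v' = 2*3^(k' div 2) \<or> u'+v' = -2*3^(k' div 2)))
       \<or> (odd k' \<and> (u'+v' = 0 \<or> u'+v' = 3^(k' div 2 + 1) \<or> u'+v' = -(3^(k' div 2 + 1))))" by simp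
    have kd: "k div 2 = Suc (k' div 2)" using k by simp
    have s: "u + v = 3*(u'+v')" using u' v' by simp
    show ?thesis using IH unfolding s kd using k by (auto simp: power_Suc)
  qed
qed


lemma count_from_eq:
  fixes n0 n1 n2 M k :: nat
  assumes sum: "n0+n1+n2 = 3^M" and sq: "3*(n0^2+n1^2+n2^2) = 3^(2*M) + 2*3^k"
    and odd: "odd n0" and k2: "k \<ge> 2" and M1: "M \<ge> 1"
  shows "(odd k \<longrightarrow> n0 = 3^(M-1)) \<and>
         (even k \<longrightarrow> (n0 = 3^(M-1) + 2*3^(k div 2 - 1) \<or> n0 + 2*3^(k div 2 - 1) = 3^(M-1)))"
proof -
  define u where "u = int n1 - int n0"
  define v where "v = int n2 - int n0"
  have sumi: "int n0 + int n1 + int n2 = 3^M" using arg_cong[OF sum, of int] by simp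
  have sqi: "3*(int n0^2+int n1^2+int n2^2) = 3^(2*M) + 2*3^k"
    using arg_cong[OF sq, of int] by simp
  have "(int n0 + int n1 + int n2)^2 = 3^(2*M)" unfolding sumi by (simp add: power_mult[symmetric] mult.commute)
  hence "2*(u^2 - u*v + v^2) = 2*3^k" using sqi unfolding u_def v_def
    by (simp add: power2_eq_square algebra_simps)
  hence e: "u^2 - u*v + v^2 = 3^k" by simp
  have s: "u + v = 3^M - 3*int n0" using sumi unfolding u_def v_def by simp
  define A :: int where "A = 3^(M-1)"
  have A: "3^M = 3*A" proof -
    have kk: "M = Suc (M - 1)" using M1 by simp
    show ?thesis unfolding A_def by (metis kk power_Suc)
  qed
  have oA: "odd A" unfolding A_def by simp
  have on: "odd (int n0)" using odd by simp
  from sol_eis[OF e] show ?thesis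
  proof
    assume H: "even k \<and> (u+v = 3^(k div 2) \<or> u+v = -(3^(k div 2)) \<or> u+v = 2*3^(k div 2) \<or> u+v = -2*3^(k div 2))"
    define B :: int where "B = 3^(k div 2 - 1)"
    have B: "3^(k div 2) = 3*B" proof -
      have kk: "k div 2 = Suc (k div 2 - 1)" using k2 by simp
      show ?thesis unfolding B_def by (metis kk power_Suc)
    qed
    have oB: "odd B" unfolding B_def by simp
    have Bn: "B = int (3^(k div 2 - 1))" unfolding B_def by simp
    have An: "A = int (3^(M-1))" unfolding A_def by simp
    from H consider "u+v = 3*B" | "u+v = -(3*B)" | "u+v = 2*(3*B)" | "u+v = -2*(3*B)" unfolding B by auto
    then have "int n0 = A + 2*B \<or> int n0 + 2*B = A"
    proof cases
      case 1 hence "int n0 = A - B" using s A by simp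
      thus ?thesis using on oA oB by auto
    next
      case 2 hence "int n0 = A + B" using s A by simp
      thus ?thesis using on oA oB by auto
    qed (use s A in auto)
    hence "n0 = 3^(M-1) + 2*3^(k div 2 - 1) \<or> n0 + 2*3^(k div 2 - 1) = 3^(M-1)"
      unfolding An Bn by linarith
    thus ?thesis using H by simp
  next
    assume H: "odd k \<and> (u+v = 0 \<or> u+v = 3^(k div 2 + 1) \<or> u+v = -(3^(k div 2 + 1)))"
    define B :: int where "B = 3^(k div 2)"
    have oB: "odd B" unfolding B_def by simp
    have An: "A = int (3^(M-1))" unfolding A_def by simp
    from H consider "u+v = 0" | "u+v = 3*B" | "u+v = -(3*B)" unfolding B_def by auto
    then have "int n0 = A"
    proof cases
      case 1 thus ?thesis using s A by simp
    next
      case 2 hence "int n0 = A - B" using s A by simp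
      thus ?thesis using on oA oB by auto
    next
      case 3 hence "int n0 = A + B" using s A by simp
      thus ?thesis using on oA oB by auto
    qed
    hence "n0 = 3^(M-1)" unfolding An by simp
    thus ?thesis using H by simp
  qed
qed

lemma fin_field_pow_card:
  fixes x :: "'a :: {field,finite}"
  shows "x ^ card (UNIV :: 'a set) = x"
proof (cases "x = 0")
  case False
  have "x * (\<Prod>y\<in>UNIV-{0}. x * y) = x * x ^ (card (UNIV :: 'a set) - 1) * \<Prod>(UNIV-{0})"
    by (simp add: prod.distrib mult_ac)
  also have "x * x ^ (card (UNIV :: 'a set) - 1) = x ^ Suc (card (UNIV :: 'a set) - 1)"
    by (subst power_Suc) auto
  also have "Suc (card (UNIV :: 'a set) - 1) = card (UNIV :: 'a set)"
    using finite_UNIV_card_ge_0[where ?'a = 'a] by simp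
  also have "(\<Prod>y\<in>UNIV-{0}. x * y) = (\<Prod>y\<in>UNIV-{0}. y)"
    by (rule prod.reindex_bij_witness[of _ "\<lambda>y. y / x" "\<lambda>y. x * y"]) (use False in auto)
  finally show ?thesis
    by simp
qed (use finite_UNIV_card_ge_0[where ?'a = 'a] in auto)

lemma card_of_nat_zero:
  "(of_nat (card (UNIV :: 'a :: {field,finite} set)) :: 'a) = 0"
proof -
  have "(\<Sum>x\<in>(UNIV::'a set). x + 1) = (\<Sum>x\<in>UNIV. x)"
    by (rule sum.reindex_bij_witness[of _ "\<lambda>x. x - 1" "\<lambda>x. x + 1"]) auto
  moreover have "(\<Sum>x\<in>(UNIV::'a set). x + 1) = (\<Sum>x\<in>UNIV. x) + of_nat (card (UNIV::'a set))"
    by (simp add: sum.distrib)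
  ultimately show ?thesis by simp
qed

lemma sub_card:
  fixes K S :: "'a::field set"
  assumes finS: "finite S"
    and K0: "0 \<in> K" and K1: "1 \<in> K"
    and Kadd: "\<And>x y. x \<in> K \<Longrightarrow> y \<in> K \<Longrightarrow> x + y \<in> K"
    and Kmul: "\<And>x y. x \<in> K \<Longrightarrow> y \<in> K \<Longrightarrow> x * y \<in> K"
    and Kneg: "\<And>x. x \<in> K \<Longrightarrow> -x \<in> K"
    and Kinv: "\<And>x. x \<in> K \<Longrightarrow> inverse x \<in> K"
    and Sadd: "\<And>x y. x \<in> S \<Longrightarrow> y \<in> S \<Longrightarrow> x + y \<in> S"
    and Smul: "\<And>k x. k \<in> K \<Longrightarrow> x \<in> S \<Longrightarrow> k * x \<in> S"
  shows "\<And>A. 0 \<in> A \<Longrightarrow> (\<forall>x\<in>A. \<forall>y\<in>A. x + y \<in> A) \<Longrightarrow> (\<forall>k\<in>K. \<forall>x\<in>A. k * x \<in> A) \<Longrightarrow> A \<subseteq> S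
         \<Longrightarrow> \<exists>j. card S = card A * card K ^ j"
proof -
  fix A
  show "0 \<in> A \<Longrightarrow> (\<forall>x\<in>A. \<forall>y\<in>A. x + y \<in> A) \<Longrightarrow> (\<forall>k\<in>K. \<forall>x\<in>A. k * x \<in> A) \<Longrightarrow> A \<subseteq> S
         \<Longrightarrow> \<exists>j. card S = card A * card K ^ j"
  proof (induction "card S - card A" arbitrary: A rule: less_induct)
    case (less A)
    have finA: "finite A" using less.prems(4) finS finite_subset by blast
    show ?case
    proof (cases "A = S")
      case True thus ?thesis by (intro exI[of _ 0]) simp
    next
      case False
      then obtain r where r: "r \<in> S" "r \<notin> A" using less.prems(4) by blast
      define A' where "A' = (\<lambda>(s,k). s + k * r) ` (A \<times> K)"
      have finK: "finite K"
      proof -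
        have "inj_on (\<lambda>k. k * r) K" using r less.prems(1) by (auto intro!: inj_onI)
        moreover have "(\<lambda>k. k * r) ` K \<subseteq> S" using Smul r by auto
        ultimately show ?thesis using finS by (metis finite_imageD finite_subset)
      qed
      have inj: "inj_on (\<lambda>(s,k). s + k * r) (A \<times> K)"
      proof (rule inj_onI, clarsimp)
        fix s k s' k' assume s: "s \<in> A" "k \<in> K" "s' \<in> A" "k' \<in> K" and eq: "s + k * r = s' + k' * r"
        show "s = s' \<and> k = k'"
        proof (cases "k = k'")
          case True thus ?thesis using eq by simp
        next
          case False
          have "(k - k') * r = s' - s" using eq by (simp add: algebra_simps)
          hence rr: "r = inverse (k - k') * (s' + (-1) * s)" using False by (simp add: field_simps)
          have "k - k' \<in> K" using Kadd[OF s(2) Kneg[OF s(4)]] by simp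
          hence "inverse (k - k') \<in> K" by (rule Kinv)
          moreover have "s' + (-1) * s \<in> A" using less.prems(2,3) s Kneg[OF K1] by blast
          ultimately have "r \<in> A" unfolding rr using less.prems(3) by blast
          thus ?thesis using r by simp
        qed
      qed
      have cardA': "card A' = card A * card K"
        unfolding A'_def by (simp add: card_image[OF inj] card_cartesian_product)
      have A'S: "A' \<subseteq> S" unfolding A'_def using Sadd Smul less.prems(4) r by auto
      have AA': "A \<subseteq> A'" unfolding A'_def
      proof
        fix s assume "s \<in> A" thus "s \<in> (\<lambda>(s,k). s + k * r) ` (A \<times> K)"
          using K0 by (intro image_eqI[of _ _ "(s,0)"]) auto
      qed
      have rA': "r \<in> A'" unfolding A'_def using less.prems(1) K1 by (intro image_eqI[of _ _ "(0,1)"]) auto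
      have "card A < card A'" using AA' rA' r(2) finite_subset[OF A'S finS]
        by (metis psubset_card_mono psubsetI)
      moreover have "card A' \<le> card S" using A'S finS by (rule card_mono[rotated])
      ultimately have lt: "card S - card A' < card S - card A" by linarith
      have c1: "0 \<in> A'" unfolding A'_def using less.prems(1) K0 by (intro image_eqI[of _ _ "(0,0)"]) auto
      have c2: "\<forall>x\<in>A'. \<forall>y\<in>A'. x + y \<in> A'"
      proof (clarsimp simp: A'_def)
        fix s k s' k' assume s: "s \<in> A" "k \<in> K" "s' \<in> A" "k' \<in> K"
        show "s + k * r + (s' + k' * r) \<in> (\<lambda>(s,k). s + k * r) ` (A \<times> K)"
          using s less.prems(2) Kadd[OF s(2) s(4)]
          by (intro image_eqI[of _ _ "(s+s', k+k')"]) (auto simp: algebra_simps)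
      qed
      have c3: "\<forall>c\<in>K. \<forall>x\<in>A'. c * x \<in> A'"
      proof (clarsimp simp: A'_def)
        fix c s k assume s: "c \<in> K" "s \<in> A" "k \<in> K"
        show "c * (s + k * r) \<in> (\<lambda>(s,k). s + k * r) ` (A \<times> K)"
          using s less.prems(3) Kmul[OF s(1) s(3)]
          by (intro image_eqI[of _ _ "(c*s, c*k)"]) (auto simp: algebra_simps)
      qed
      from less.hyps[OF lt c1 c2 c3 A'S] obtain j where "card S = card A' * card K ^ j" by blast
      hence "card S = card A * card K ^ Suc j" unfolding cardA' by (simp add: mult.assoc)
      thus ?thesis by blast
    qed
  qed
qed


locale gf3 =
  fixes h m e :: nat and TY :: "'a :: {field,finite} itself"
  assumes card: "card (UNIV :: 'a set) = 3^m"
    and mh: "m = 3*h" and eh: "e = 3^h" and hpos: "h > 0"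
begin

lemma CHAR3: "CHAR('a) = 3"
proof -
  have pos: "CHAR('a) > 0" by (rule finite_imp_CHAR_pos) simp
  have pr: "prime CHAR('a)" by (rule prime_CHAR_semidom[OF pos])
  have "(of_nat (3^m) :: 'a) = 0" using card_of_nat_zero[where 'a='a] card by simp
  hence "CHAR('a) dvd 3^m" using of_nat_eq_0_iff_char_dvd[of "3^m", where 'a='a] by blast
  hence "CHAR('a) dvd 3" by (rule prime_dvd_power[OF pr])
  thus ?thesis using pr by (simp add: primes_dvd_imp_eq)
qed

lemma three0: "(3::'a) = 0"
  using of_nat_CHAR[where 'a='a] unfolding CHAR3 by simp

lemma frob: "((x::'a) + y) ^ (3^n) = x^(3^n) + y^(3^n)"
  by (rule freshmans_dream') (simp_all add: CHAR3)

lemma fermat: "(x::'a) ^ (3^m) = x"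
  using fin_field_pow_card[of x] card by simp


lemma m_pos: "m > 0" using mh hpos by simp

lemma two_eq: "(2::'a) = -1"
proof -
  have "(2::'a) + 1 = 0" using three0 by simp
  thus ?thesis by (simp add: eq_neg_iff_add_eq_0)
qed

lemma one_neq_m1: "(1::'a) \<noteq> -1"
proof
  assume "(1::'a) = -1"
  hence "(2::'a) = 0" by (metis one_add_one add.inverse_inverse neg_eq_iff_add_eq_0)
  hence "(1::'a) = 0" using three0 by (metis add_0 numeral_Bit1 numeral_One one_add_one)
  thus False by simp
qed

lemma neg_self: "(x::'a) = - x \<Longrightarrow> x = 0"
proof -
  assume "x = -x"
  hence "2 * x = 0" by (metis mult_2 add.right_inverse)
  hence "- x = 0" using two_eq by simp
  thus "x = 0" by simp
qed

abbreviation Tr :: "'a \<Rightarrow> 'a" where "Tr \<equiv> abs_trace3 m"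

lemma Tr_add: "Tr (x + y) = Tr x + Tr y"
  unfolding abs_trace3_def by (simp add: frob sum.distrib)

lemma Tr_0: "Tr 0 = 0"
  unfolding abs_trace3_def by (simp add: power_0_left)

lemma Tr_neg: "Tr (- x) = - Tr x"
proof -
  have "Tr x + Tr (-x) = 0" using Tr_add[of x "-x"] Tr_0 by simp
  hence "- Tr x = Tr (-x)" by (simp only: neg_eq_iff_add_eq_0)
  thus ?thesis by simp
qed

lemma Tr_diff: "Tr (x - y) = Tr x - Tr y"
  using Tr_add[of x "-y"] Tr_neg[of y] by simp

lemma Tr_pow3: "Tr (x^3) = Tr x"
proof -
  obtain n where n: "m = Suc n" using m_pos by (cases m) auto
  have "Tr (x^3) = (\<Sum>i<m. x^(3^Suc i))"
    unfolding abs_trace3_def by (simp add: power_mult[symmetric] mult.commute)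
  also have "\<dots> = (\<Sum>i<n. x^(3^Suc i)) + x^(3^m)" unfolding n by (rule sum.lessThan_Suc)
  also have "x^(3^m) = x" by (rule fermat)
  also have "(\<Sum>i<n. x^(3^Suc i)) + x = Tr x"
    unfolding abs_trace3_def n sum.lessThan_Suc_shift by (simp add: add.commute)
  finally show ?thesis .
qed

lemma Tr_pow3n: "Tr (x^(3^n)) = Tr x"
proof (induction n)
  case (Suc n)
  have "x^(3^Suc n) = (x^(3^n))^3" by (simp add: power_mult[symmetric] mult.commute)
  thus ?case using Tr_pow3 Suc by simp
qed simp

lemma Tr_cube: "(Tr x)^3 = Tr x"
proof -
  have "(Tr x)^3 = (\<Sum>i<m. (x^(3^i))^3)"
    unfolding abs_trace3_def by (rule freshmans_dream_sum) (simp_all add: CHAR3)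
  also have "\<dots> = Tr (x^3)" unfolding abs_trace3_def by (simp add: power_mult[symmetric] mult.commute)
  finally show ?thesis using Tr_pow3 by simp
qed

definition P3 :: "'a set" where "P3 = {0, 1, -1}"

lemma cube_roots: "(t::'a)^3 = t \<Longrightarrow> t \<in> P3"
proof -
  assume "t^3 = t"
  hence "t * (t - 1) * (t + 1) = 0" by (simp add: algebra_simps power3_eq_cube)
  thus ?thesis unfolding P3_def by (auto simp: eq_neg_iff_add_eq_0)
qed

lemma Tr_P3: "Tr x \<in> P3" by (rule cube_roots[OF Tr_cube])

lemma P3_cases: "t \<in> P3 \<Longrightarrow> t = 0 \<or> t = 1 \<or> t = -1" unfolding P3_def by auto

lemma card_roots_le:
  fixes p :: "'a poly"
  assumes "p \<noteq> 0" "degree p \<le> d" "\<And>x. f x = poly p x"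
  shows "card {x. f x = 0} \<le> d"
  using card_poly_roots_bound[OF assms(1)] assms(2,3) by simp

lemma Tr_nonzero: "\<exists>x. Tr x \<noteq> 0"
proof -
  define p :: "'a poly" where "p = (\<Sum>i<m. monom 1 (3^i))"
  have pv: "Tr x = poly p x" for x unfolding p_def abs_trace3_def by (simp add: poly_sum poly_monom)
  have "coeff p (3^(m-1)) = (\<Sum>i<m. if 3^i = (3::nat)^(m-1) then 1 else 0)"
    unfolding p_def by (simp add: coeff_sum)
  also have "\<dots> = (\<Sum>i\<in>{m-1}. 1)"
    by (rule sum.mono_neutral_cong_right) (use m_pos in auto)
  finally have "coeff p (3^(m-1)) \<noteq> 0" by simp
  hence p0: "p \<noteq> 0" by auto
  have "degree p \<le> 3^(m-1)" unfolding p_def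
    by (rule degree_sum_le) (auto intro: order.trans[OF degree_monom_le] simp: power_increasing)
  hence "card {x. Tr x = 0} \<le> 3^(m-1)" using card_roots_le[OF p0 _ pv] by blast
  also have "\<dots> < 3^m" using m_pos by simp
  finally have "{x. Tr x = 0} \<noteq> UNIV" using card by auto
  thus ?thesis by auto
qed


lemma add_fiber:
  fixes f :: "'a \<Rightarrow> 'a"
  assumes add: "\<And>x y. f (x+y) = f x + f y" and y0: "f y0 = s"
  shows "card {y. f y = s} = card {y. f y = 0}"
proof -
  have f0: "f 0 = 0" using add[of 0 0] by (metis add.right_neutral add_left_cancel)
  have "{y. f y = s} = (\<lambda>y. y + y0) ` {y. f y = 0}"
  proof (intro set_eqI iffI)
    fix y assume "y \<in> {y. f y = s}"
    hence "f (y - y0) = 0" using add[of "y - y0" y0] y0 by simp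
    thus "y \<in> (\<lambda>y. y + y0) ` {y. f y = 0}" by (intro image_eqI[of _ _ "y - y0"]) auto
  next
    fix y assume "y \<in> (\<lambda>y. y + y0) ` {y. f y = 0}"
    thus "y \<in> {y. f y = s}" using add y0 by auto
  qed
  moreover have "inj (\<lambda>y::'a. y + y0)" by (rule injI) simp
  ultimately show ?thesis by (simp add: card_image inj_on_subset)
qed

lemma add_card_decomp:
  fixes f :: "'a \<Rightarrow> 'a"
  assumes add: "\<And>x y. f (x+y) = f x + f y"
  shows "card (UNIV::'a set) = card (range f) * card {y. f y = 0}"
proof -
  have "(\<Sum>s\<in>range f. card {y. f y = s}) = card (UNIV::'a set)"
    using sum.group[of "UNIV::'a set" "range f" f "\<lambda>_. 1::nat"] by simp
  also have "(\<Sum>s\<in>range f. card {y. f y = s}) = (\<Sum>s\<in>range f. card {y. f y = 0})"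
    by (rule sum.cong) (auto intro: add_fiber[OF add])
  finally show ?thesis by simp
qed

lemma P3_card: "card P3 = 3"
  unfolding P3_def using one_neq_m1 by simp

lemma sum_P3: "(\<Sum>s\<in>P3. g s) = g 0 + g 1 + g (-1)"
  unfolding P3_def using one_neq_m1 by (simp add: add.assoc)

lemma Tr_fiber:
  assumes c: "c \<noteq> 0" and s: "s \<in> P3"
  shows "card {y. Tr (c*y) = s} = 3^(m-1)"
proof -
  define f where "f y = Tr (c*y)" for y
  have add: "f (x+y) = f x + f y" for x y unfolding f_def by (simp add: distrib_left Tr_add)
  obtain x where x: "Tr x \<noteq> 0" using Tr_nonzero by blast
  have fx: "f (x/c) = Tr x" unfolding f_def using c by simp
  have fnx: "f (-(x/c)) = - Tr x" unfolding f_def using c by (simp add: Tr_neg)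
  have hit: "\<exists>y. f y = t" if "t \<in> P3" for t
  proof -
    from Tr_P3[of x] x have "Tr x = 1 \<or> Tr x = -1" unfolding P3_def by auto
    moreover from that have "t = 0 \<or> t = 1 \<or> t = -1" unfolding P3_def by auto
    moreover have "f 0 = 0" unfolding f_def using Tr_0 by simp
    ultimately show ?thesis using fx fnx by (metis minus_minus)
  qed
  have eq: "card {y. f y = t} = card {y. f y = 0}" if "t \<in> P3" for t
    using hit[OF that] add_fiber[OF add] by blast
  have "(\<Sum>t\<in>P3. card {y. f y = t}) = card (UNIV::'a set)"
  proof -
    have "f ` UNIV \<subseteq> P3" using Tr_P3 by (auto simp: f_def)
    from sum.group[OF _ _ this, of "\<lambda>_. 1::nat"] show ?thesis by (simp add: P3_def)
  qed
  also have "(\<Sum>t\<in>P3. card {y. f y = t}) = 3 * card {y. f y = 0}"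
    using eq P3_card by simp
  finally have "3 * card {y. f y = 0} = 3^m" using card by simp
  hence "card {y. f y = 0} = 3^(m-1)" using m_pos by (cases m) auto
  thus ?thesis using eq[OF s] unfolding f_def by simp
qed


lemma eee: "e*e*e = 3^m"
proof -
  have "(3::nat)^(h*3) = (3^h)^3" by (rule power_mult)
  thus ?thesis unfolding eh mh by (simp add: power3_eq_cube mult.commute)
qed
lemma ee: "e*e = 3^(2*h)"
proof -
  have "(3::nat)^(h*2) = (3^h)^2" by (rule power_mult)
  thus ?thesis unfolding eh by (simp add: power2_eq_square mult.commute)
qed
lemma e_ge3: "e \<ge> 3"
proof -
  have "(3::nat)^1 \<le> 3^h" by (rule power_increasing) (use hpos in auto)
  thus ?thesis unfolding eh by simp
qed
lemma e_odd: "odd e" unfolding eh by simp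

lemma sig_add: "((x::'a) + y)^e = x^e + y^e" unfolding eh by (rule frob)
lemma sig2_add: "((x::'a) + y)^(e*e) = x^(e*e) + y^(e*e)" unfolding ee by (rule frob)
lemma fermat_e: "(x::'a)^(e*e*e) = x" unfolding eee by (rule fermat)
lemma Tr_e: "Tr (x^e) = Tr x" unfolding eh by (rule Tr_pow3n)
lemma Tr_ee: "Tr (x^(e*e)) = Tr x" unfolding ee by (rule Tr_pow3n)
lemma sig_neg: "(-(x::'a))^e = - (x^e)" using e_odd by (simp add: power_minus_odd)
lemma sig2_neg: "(-(x::'a))^(e*e) = - (x^(e*e))" using e_odd by (simp add: power_minus_odd)

lemma poly_root_bound3:
  fixes a b c :: 'a
  assumes "a \<noteq> 0" "n2 > n1" "n1 > n0"
  shows "card {x. a * x^n2 + b * x^n1 + c * x^n0 = 0} \<le> n2"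
proof -
  define p where "p = monom a n2 + monom b n1 + monom c n0"
  have pv: "a * x^n2 + b * x^n1 + c * x^n0 = poly p x" for x unfolding p_def by (simp add: poly_monom)
  have "coeff p n2 = a" unfolding p_def using assms by simp
  hence p0: "p \<noteq> 0" using assms by auto
  have "degree p \<le> n2" unfolding p_def using assms
    by (intro degree_add_le degree_monom_le[THEN order.trans]) auto
  from card_roots_le[OF p0 this, of "\<lambda>x. a * x^n2 + b * x^n1 + c * x^n0"] pv show ?thesis by simp
qed

lemma Kcard: "card {x::'a. x^e = x} = e"
proof -
  define T where "T x = x + x^e + x^(e*e)" for x :: 'a
  have Tadd: "T (x + y) = T x + T y" for x y unfolding T_def sig_add sig2_add by (simp only: ac_simps)
  have TK: "range T \<subseteq> {x. x^e = x}"
  proof clarsimp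
    fix x
    have "(T x)^e = x^e + (x^e)^e + (x^(e*e))^e" unfolding T_def sig_add by (rule refl)
    also have "(x^e)^e = x^(e*e)" by (simp only: power_mult)
    also have "(x^(e*e))^e = x" by (simp only: power_mult[symmetric] fermat_e)
    finally show "(T x)^e = T x" unfolding T_def by (simp only: ac_simps)
  qed
  have kerT: "card {x. T x = 0} \<le> e*e"
  proof -
    have "card {x::'a. 1 * x^(e*e) + 1 * x^e + 1 * x^1 = 0} \<le> e*e"
      by (rule poly_root_bound3) (use e_ge3 in auto)
    moreover have "{x::'a. 1 * x^(e*e) + 1 * x^e + 1 * x^1 = 0} = {x. T x = 0}"
      unfolding T_def by (simp only: mult_1 mult_1_right power_one_right ac_simps)
    ultimately show ?thesis by simp
  qed
  have Kle: "card {x::'a. x^e = x} \<le> e"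
  proof -
    have "card {x::'a. 1 * x^e + (-1) * x^1 + 0 * x^0 = 0} \<le> e"
      by (rule poly_root_bound3) (use e_ge3 in auto)
    moreover have "{x::'a. 1 * x^e + (-1) * x^1 + 0 * x^0 = 0} = {x. x^e = x}" by auto
    ultimately show ?thesis by simp
  qed
  have "e*e*e = card (range T) * card {x. T x = 0}"
    using add_card_decomp[OF Tadd] card eee by simp
  also have "\<dots> \<le> card {x::'a. x^e = x} * (e*e)"
    by (intro mult_mono card_mono TK kerT) auto
  finally have "e * (e*e) \<le> card {x::'a. x^e = x} * (e*e)" by (simp only: mult.assoc)
  hence "e \<le> card {x::'a. x^e = x}" using e_ge3 by (simp only: mult_le_cancel2) simp
  thus ?thesis using Kle by simp
qed

end

context gf3 begin

definition Qf :: "'a \<Rightarrow> 'a \<Rightarrow> 'a \<Rightarrow> 'a" where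
  "Qf a u y = Tr (a * y^(e+1) + u * y^2)"

definition Lf :: "'a \<Rightarrow> 'a \<Rightarrow> 'a \<Rightarrow> 'a" where
  "Lf a u x = a * x^e + a^(e*e) * x^(e*e) + (u+u) * x"

lemma Tr_swap: "Tr (a * y * z^e) = Tr (a^(e*e) * y^(e*e) * z)"
proof -
  have "Tr (a * y * z^e) = Tr ((a * y * z^e)^(e*e))" by (rule Tr_ee[symmetric])
  also have "(a * y * z^e)^(e*e) = a^(e*e) * y^(e*e) * z^(e*(e*e))"
    by (simp only: power_mult_distrib power_mult)
  also have "z^(e*(e*e)) = z" using fermat_e by (simp only: mult.assoc)
  finally show ?thesis .
qed

lemma polar: "Qf a u (y+z) = Qf a u y + Qf a u z + Tr (z * Lf a u y)"
proof -
  have p1: "(y+z)^(e+1) = y^(e+1) + z^(e+1) + y^e*z + z^e*y"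
    by (simp add: power_add sig_add algebra_simps)
  have p2: "(y+z)^2 = y^2 + z^2 + 2*y*z" by (simp add: power2_eq_square algebra_simps)
  have "a * (y+z)^(e+1) + u * (y+z)^2 =
        (a * y^(e+1) + u * y^2) + (a * z^(e+1) + u * z^2) + (a * y * z^e) + z * (a * y^e + (u+u) * y)"
    unfolding p1 p2 by (simp add: algebra_simps)
  hence 1: "Qf a u (y+z) = Qf a u y + Qf a u z + Tr (a * y * z^e) + Tr (z * (a * y^e + (u+u) * y))"
    unfolding Qf_def by (simp only: Tr_add)
  have 2: "Tr (a * y * z^e) + Tr (z * (a * y^e + (u+u) * y)) = Tr (z * Lf a u y)"
    unfolding Tr_swap Lf_def Tr_add[symmetric] by (simp add: algebra_simps)
  show ?thesis using 1 2 by (simp add: add.assoc)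
qed

lemma Lsym: "Tr (z * Lf a u y) = Tr (y * Lf a u z)"
  using polar[of a u y z] polar[of a u z y] by (simp add: add.commute add.left_commute)

lemma Qneg: "Qf a u (-y) = Qf a u y"
  unfolding Qf_def using e_odd by simp

lemma Qval: "Qf a u y \<in> P3" unfolding Qf_def by (rule Tr_P3)

lemma Rzero: assumes "Lf a u z = 0" shows "Qf a u z = 0"
proof -
  have "Qf a u (z+z) = Qf a u z + Qf a u z" using polar[of a u z z] assms Tr_0 by simp
  moreover have "z + z = -z" using two_eq by (metis mult_2 mult_minus1 mult.commute)
  ultimately have "Qf a u z + Qf a u z = Qf a u z" using Qneg by simp
  thus ?thesis by (metis add_cancel_right_right)
qed

lemma shift_count:
  assumes u: "u = 0 \<or> u = 1"
  shows "card {y. Qf a u (y+z) = Qf a u y} = (if Lf a u z = 0 then 3^m else 3^(m-1))"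
proof -
  have eq: "Qf a u (y+z) = Qf a u y \<longleftrightarrow> Tr (Lf a u z * y) = - Qf a u z" for y
  proof -
    have "Qf a u (y+z) = Qf a u y + (Qf a u z + Tr (Lf a u z * y))"
      using polar[of a u y z] Lsym[of z a u y] by (simp add: mult.commute add.assoc)
    thus ?thesis by (metis add.commute add_cancel_right_right eq_neg_iff_add_eq_0)
  qed
  show ?thesis
  proof (cases "Lf a u z = 0")
    case True
    hence "{y. Qf a u (y+z) = Qf a u y} = UNIV" using eq Tr_0 Rzero[OF True] by auto
    thus ?thesis using True card by simp
  next
    case False
    have "- Qf a u z \<in> P3" using Qval[of a u z] unfolding P3_def by auto
    from Tr_fiber[OF False this] show ?thesis using False eq by simp
  qed
qed


lemma card_pred_sum: "card {x::'a. P x} = (\<Sum>x\<in>UNIV. if P x then 1 else 0)"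
proof -
  have "card {x::'a. P x} = (\<Sum>x\<in>{x\<in>UNIV. P x}. 1)" by simp
  also have "\<dots> = (\<Sum>x\<in>UNIV. if P x then 1 else 0)" by (rule sum.inter_filter) simp
  finally show ?thesis .
qed

lemma odd_card_neg:
  fixes S :: "'a set"
  assumes "0 \<in> S" "\<And>x. x \<in> S \<Longrightarrow> -x \<in> S"
  shows "odd (card S)"
  using assms
proof (induction "card S" arbitrary: S rule: less_induct)
  case (less S)
  show ?case
  proof (cases "S = {0}")
    case True thus ?thesis by simp
  next
    case False
    then obtain x where x: "x \<in> S" "x \<noteq> 0" using less.prems(1) by blast
    have nx: "-x \<in> S" "-x \<noteq> x" using less.prems(2)[OF x(1)] x(2) neg_self[of x] by auto
    define S' where "S' = S - {x, -x}"
    have c: "card S = Suc (Suc (card S'))"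
    proof -
      have "card S' = card S - card {x, -x}" unfolding S'_def using x nx by (simp add: card_Diff_subset)
      moreover have "card {x, -x} = 2" using nx by simp
      moreover have "card S \<ge> 2" using x nx card_mono[of S "{x,-x}"] by simp
      ultimately show ?thesis by simp
    qed
    have "odd (card S')"
    proof (rule less.hyps)
      show "card S' < card S" using c by simp
      show "0 \<in> S'" unfolding S'_def using less.prems(1) x by auto
      show "-y \<in> S'" if "y \<in> S'" for y using that less.prems(2) unfolding S'_def by auto
    qed
    thus ?thesis using c by simp
  qed
qed

lemma sum_sq_count:
  assumes u: "u = 0 \<or> u = 1"
  shows "(\<Sum>s\<in>P3. card {y. Qf a u y = s} * card {y. Qf a u y = s})
       = card {z. Lf a u z = 0} * 3^m + (3^m - card {z. Lf a u z = 0}) * 3^(m-1)"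
proof -
  define n where "n s = card {y. Qf a u y = s}" for s
  define R where "R = {z. Lf a u z = 0}"
  have a: "(\<Sum>y\<in>UNIV. n (Qf a u y)) = (\<Sum>s\<in>P3. n s * n s)"
  proof -
    have "Qf a u ` UNIV \<subseteq> P3" using Qval by auto
    from sum.group[OF _ _ this, of "\<lambda>y. n (Qf a u y)"]
    have "(\<Sum>y\<in>UNIV. n (Qf a u y)) = (\<Sum>s\<in>P3. \<Sum>y\<in>{y. Qf a u y = s}. n (Qf a u y))" by (simp add: P3_def)
    also have "\<dots> = (\<Sum>s\<in>P3. \<Sum>y\<in>{y. Qf a u y = s}. n s)" by (intro sum.cong) auto
    also have "\<dots> = (\<Sum>s\<in>P3. n s * n s)" by (simp add: n_def)
    finally show ?thesis .
  qed
  have b: "n (Qf a u y) = card {z. Qf a u (y+z) = Qf a u y}" for y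
  proof -
    have "{x. Qf a u x = Qf a u y} = (\<lambda>z. y + z) ` {z. Qf a u (y+z) = Qf a u y}"
      by (auto intro: image_eqI[of _ _ "_ - y"])
    moreover have "inj (\<lambda>z::'a. y + z)" by (rule injI) simp
    ultimately show ?thesis unfolding n_def by (simp add: card_image inj_on_subset)
  qed
  have c: "(\<Sum>y\<in>UNIV. card {z. Qf a u (y+z) = Qf a u y}) = (\<Sum>z\<in>UNIV. card {y. Qf a u (y+z) = Qf a u y})"
    unfolding card_pred_sum by (rule sum.swap)
  have d: "(\<Sum>z\<in>UNIV. card {y. Qf a u (y+z) = Qf a u y}) = card R * 3^m + (3^m - card R) * 3^(m-1)"
  proof -
    have "(\<Sum>z\<in>UNIV. card {y. Qf a u (y+z) = Qf a u y}) = (\<Sum>z\<in>UNIV. if z \<in> R then 3^m else 3^(m-1))"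
      using shift_count[OF u] unfolding R_def by simp
    also have "\<dots> = (\<Sum>z\<in>R. 3^m) + (\<Sum>z\<in>UNIV - R. 3^(m-1))"
      by (simp add: sum.If_cases Int_def Diff_eq)
    also have "\<dots> = card R * 3^m + (3^m - card R) * 3^(m-1)"
      by (simp add: card_Diff_subset card)
    finally show ?thesis .
  qed
  show ?thesis using a b c d unfolding n_def R_def by simp
qed

lemma count_sum:
  "card {y. Qf a u y = 0} + card {y. Qf a u y = 1} + card {y. Qf a u y = -1} = 3^m"
proof -
  have "Qf a u ` UNIV \<subseteq> P3" using Qval by auto
  from sum.group[OF _ _ this, of "\<lambda>_. 1::nat"] show ?thesis
    using card sum_P3[of "\<lambda>s. card {x. Qf a u x = s}"] by simp
qed

lemma n0_odd: "odd (card {y. Qf a u y = 0})"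
proof (rule odd_card_neg)
  show "0 \<in> {y. Qf a u y = 0}" by (simp add: Qf_def power_0_left Tr_0)
  fix x assume "x \<in> {y. Qf a u y = 0}"
  thus "-x \<in> {y. Qf a u y = 0}" by (simp add: Qneg)
qed

lemma arith_aux:
  fixes r q q1 :: nat
  assumes "r \<le> q" "3 * q1 = q"
  shows "3 * (r * q + (q - r) * q1) = q * q + 2 * (q * r)"
proof -
  obtain d where d: "q = r + d" using assms(1) le_Suc_ex by blast
  have "3 * ((q - r) * q1) = d * q" using d assms(2) by (simp add: algebra_simps)
  hence "3 * (r * q + (q - r) * q1) = 3 * r * q + d * q" by (simp add: algebra_simps)
  thus ?thesis using d by (simp add: algebra_simps)
qed

lemma form_zeros:
  assumes u: "u = 0 \<or> u = 1" and rad: "card {z. Lf a u z = 0} = e^j"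
  shows "(odd (m + h*j) \<longrightarrow> card {y. Qf a u y = 0} = 3^(m-1)) \<and>
         (even (m + h*j) \<longrightarrow> (card {y. Qf a u y = 0} = 3^(m-1) + 2*3^((m + h*j) div 2 - 1)
                                \<or> card {y. Qf a u y = 0} + 2*3^((m + h*j) div 2 - 1) = 3^(m-1)))"
proof (rule count_from_eq[OF count_sum _ n0_odd])
  define r where "r = card {z. Lf a u z = 0}"
  have r: "r = 3^(h*j)" unfolding r_def rad by (simp add: eh power_mult)
  have rq: "r \<le> 3^m"
  proof -
    have "r \<le> card (UNIV::'a set)" unfolding r_def by (rule card_mono) auto
    thus ?thesis using card by simp
  qed
  have q3: "3 * 3^(m-1) = (3::nat)^m" using m_pos by (cases m) auto
  have S: "(\<Sum>s\<in>P3. card {y. Qf a u y = s} * card {y. Qf a u y = s}) = r * 3^m + (3^m - r) * 3^(m-1)"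
    using sum_sq_count[OF u, of a] unfolding r_def .
  have "3 * (\<Sum>s\<in>P3. card {y. Qf a u y = s} * card {y. Qf a u y = s}) = 3^m * 3^m + 2 * (3^m * r)"
    unfolding S by (rule arith_aux[OF rq q3])
  also have "\<dots> = 3^(2*m) + 2 * 3^(m + h*j)" unfolding r by (simp add: power_add mult_2)
  finally show "3 * ((card {y. Qf a u y = 0})^2 + (card {y. Qf a u y = 1})^2 + (card {y. Qf a u y = -1})^2)
      = 3^(2*m) + 2 * 3^(m + h*j)" by (simp add: sum_P3 power2_eq_square)
  show "2 \<le> m + h*j" using mh hpos by simp
  show "1 \<le> m" using m_pos by simp
qed

end

context gf3 begin

lemma pow_mult_e: "((x::'a) * y)^n = x^n * y^n" by (rule power_mult_distrib)

lemma Lf_add: "Lf a u (x + y) = Lf a u x + Lf a u y"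
  unfolding Lf_def sig_add sig2_add by (simp add: algebra_simps)

lemma Lf_smul: assumes "k^e = k" shows "Lf a u (k * x) = k * Lf a u x"
proof -
  have "k^(e*e) = k" using assms by (simp add: power_mult)
  thus ?thesis unfolding Lf_def using assms by (simp add: power_mult_distrib algebra_simps)
qed

lemma rad_card:
  assumes a: "a \<noteq> 0"
  shows "\<exists>j\<le>2. card {z. Lf a u z = 0} = e^j"
proof -
  let ?K = "{x::'a. x^e = x}"
  let ?R = "{z. Lf a u z = 0}"
  have "\<exists>j. card ?R = card {0::'a} * card ?K ^ j"
  proof (rule sub_card)
    show "finite ?R" by simp
    show "(0::'a) \<in> ?K" using e_ge3 by (simp add: power_0_left)
    show "(1::'a) \<in> ?K" by simp
    show "x + y \<in> ?K" if "x \<in> ?K" "y \<in> ?K" for x y using that by (simp add: sig_add)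
    show "x * y \<in> ?K" if "x \<in> ?K" "y \<in> ?K" for x y using that by (simp add: power_mult_distrib)
    show "-x \<in> ?K" if "x \<in> ?K" for x using that by (simp add: sig_neg)
    show "inverse x \<in> ?K" if "x \<in> ?K" for x using that by (simp add: power_inverse)
    show "x + y \<in> ?R" if "x \<in> ?R" "y \<in> ?R" for x y using that by (simp add: Lf_add)
    show "k * x \<in> ?R" if "k \<in> ?K" "x \<in> ?R" for k x using that by (simp add: Lf_smul)
    show "(0::'a) \<in> {0}" by simp
    show "\<forall>x\<in>{0::'a}. \<forall>y\<in>{0}. x + y \<in> {0}" by simp
    show "\<forall>k\<in>?K. \<forall>x\<in>{0::'a}. k * x \<in> {0}" by simp
    show "{0::'a} \<subseteq> ?R" using e_ge3 by (simp add: Lf_def power_0_left)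
  qed
  then obtain j where j: "card ?R = e^j" using Kcard by auto
  have "card {x::'a. a^(e*e) * x^(e*e) + a * x^e + (u+u) * x^1 = 0} \<le> e*e"
    by (rule poly_root_bound3) (use a e_ge3 in auto)
  moreover have "{x::'a. a^(e*e) * x^(e*e) + a * x^e + (u+u) * x^1 = 0} = ?R"
    unfolding Lf_def by (simp add: ac_simps)
  ultimately have "e^j \<le> e^2" using j by (simp add: power2_eq_square)
  hence "j \<le> 2" using e_ge3 by (simp add: power_le_imp_le_exp)
  thus ?thesis using j by blast
qed

definition Dt :: "'a \<Rightarrow> 'a \<Rightarrow> 'a" where
  "Dt a c = c^3 - c * (a^2 + (a^e)^2 + (a^(e*e))^2) + 2 * a * a^e * a^(e*e)"

lemma det_zero:
  assumes u: "u = 0 \<or> u = 1" and x: "x \<noteq> 0" and L: "Lf a u x = 0"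
  shows "Dt a (u+u) = 0"
proof -
  define c where "c = u + u"
  have "(u+u)^e = u+u" using u
  proof
    assume "u = 0" thus ?thesis using e_ge3 by (simp add: power_0_left)
  next
    assume u1: "u = 1"
    have t: "(1::'a) + 1 = -1" using two_eq by (simp add: one_add_one)
    show ?thesis unfolding u1 t using e_odd by simp
  qed
  hence ce: "c^e = c" unfolding c_def .
  have cee: "c^(e*e) = c" using ce by (simp add: power_mult)
  have aeee: "a^(e*e*e) = a" by (rule fermat_e)
  have xeee: "x^(e*e*e) = x" by (rule fermat_e)
  have aeeee: "(a^(e*e))^(e*e) = a^e"
  proof -
    have "(a^(e*e))^(e*e) = (a^(e*e*e))^e" by (simp only: power_mult[symmetric] ac_simps)
    thus ?thesis using aeee by simp
  qed
  have xeeee: "(x^(e*e))^(e*e) = x^e"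
  proof -
    have "(x^(e*e))^(e*e) = (x^(e*e*e))^e" by (simp only: power_mult[symmetric] ac_simps)
    thus ?thesis using xeee by simp
  qed
  have E0: "c * x + a * x^e + a^(e*e) * x^(e*e) = 0" using L unfolding Lf_def c_def by (simp add: ac_simps)
  have E1: "c * x^e + a^e * x^(e*e) + a * x = 0"
  proof -
    have "(c * x + a * x^e + a^(e*e) * x^(e*e))^e = 0" using E0 e_ge3 by (simp add: power_0_left)
    moreover have "(c * x + a * x^e + a^(e*e) * x^(e*e))^e = c^e * x^e + a^e * (x^e)^e + (a^(e*e))^e * (x^(e*e))^e"
      by (simp only: sig_add power_mult_distrib)
    moreover have "(x^e)^e = x^(e*e)" "(a^(e*e))^e = a" "(x^(e*e))^e = x"
      using aeee xeee by (simp_all only: power_mult[symmetric])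
    ultimately show ?thesis using ce by simp
  qed
  have E2: "c * x^(e*e) + a^(e*e) * x + a^e * x^e = 0"
  proof -
    have z: "(0::'a)^(e*e) = 0" by (rule zero_power) (use e_ge3 in simp)
    have B: "(c * x + a * x^e + a^(e*e) * x^(e*e))^(e*e) = 0" unfolding E0 by (rule z)
    have A: "(c * x + a * x^e + a^(e*e) * x^(e*e))^(e*e) = c^(e*e) * x^(e*e) + a^(e*e) * (x^e)^(e*e) + (a^(e*e))^(e*e) * (x^(e*e))^(e*e)"
      by (simp only: sig2_add power_mult_distrib)
    have xe: "(x^e)^(e*e) = x"
      using xeee by (simp only: power_mult[symmetric] mult.assoc)
    have "c^(e*e) * x^(e*e) + a^(e*e) * (x^e)^(e*e) + (a^(e*e))^(e*e) * (x^(e*e))^(e*e) = 0"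
      using B unfolding A .
    thus ?thesis unfolding cee aeeee xeeee xe by (simp only: ac_simps)
  qed
  have "Dt a c * x = 0"
  proof -
    define al where "al = a" define be where "be = a^e" define ga where "ga = a^(e*e)"
    define x1 where "x1 = x^e" define x2 where "x2 = x^(e*e)"
    have e0: "c * x + al * x1 + ga * x2 = 0" using E0 unfolding al_def x1_def ga_def x2_def .
    have e1: "al * x + c * x1 + be * x2 = 0" using E1 unfolding al_def x1_def be_def x2_def by (simp add: ac_simps)
    have e2: "ga * x + be * x1 + c * x2 = 0" using E2 unfolding ga_def x1_def be_def x2_def by (simp add: ac_simps)
    have "Dt a c = c^3 - c * (al^2 + be^2 + ga^2) + 2 * al * be * ga"
      unfolding Dt_def al_def be_def ga_def ..
    also have "\<dots> * x = (c*c - be*be) * (c * x + al * x1 + ga * x2) - (al*c - be*ga) * (al * x + c * x1 + be * x2)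
                  + (al*be - c*ga) * (ga * x + be * x1 + c * x2)"
      by (simp add: algebra_simps power2_eq_square power3_eq_cube)
    also have "\<dots> = 0" using e0 e1 e2 by simp
    finally show ?thesis .
  qed
  thus ?thesis using x unfolding c_def by simp
qed

end

lemma e_mod4:
  fixes h :: nat assumes "odd h" shows "(3::nat)^h mod 4 = 3"
proof -
  obtain l where l: "h = Suc (2*l)" using assms oddE by (metis Suc_eq_plus1)
  have "(3::nat)^h = 3 * 9^l" unfolding l by (simp add: power_mult)
  moreover have "(9::nat)^l mod 4 = 1"
  proof -
    have "(9::nat)^l mod 4 = ((9 mod 4)^l) mod 4" by (rule power_mod[symmetric])
    thus ?thesis by simp
  qed
  moreover have "(3 * (9::nat)^l) mod 4 = (3 * ((9::nat)^l mod 4)) mod 4" by (rule mod_mult_right_eq[symmetric])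
  ultimately show ?thesis by simp
qed

context gf3 begin

lemma four_eq: "(4::'a) = 1"
proof -
  have "(4::'a) = 3 + 1" by simp
  thus ?thesis using three0 by simp
qed

lemma rad_info:
  assumes u: "u = 0 \<or> u = 1" and au: "a \<noteq> 0 \<or> u = 1"
  shows "(\<exists>j\<le>2. card {z. Lf a u z = 0} = e^j) \<and> (Dt a (u+u) \<noteq> 0 \<longrightarrow> card {z. Lf a u z = 0} = 1)"
proof -
  have R1: "card {z. Lf a u z = 0} = 1" if "Dt a (u+u) \<noteq> 0"
  proof -
    have "{z. Lf a u z = 0} = {0}"
    proof (intro set_eqI iffI)
      fix z assume "z \<in> {z. Lf a u z = 0}"
      thus "z \<in> {0}" using det_zero[OF u, of z a] that by auto
    next
      fix z assume "z \<in> {0::'a}" thus "z \<in> {z. Lf a u z = 0}" using e_ge3 by (simp add: Lf_def power_0_left)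
    qed
    thus ?thesis by simp
  qed
  show ?thesis
  proof (cases "a = 0")
    case False
    thus ?thesis using rad_card[OF False, of u] R1 by blast
  next
    case True
    hence u1: "u = 1" using au by simp
    have "Dt a (u+u) \<noteq> 0"
    proof -
      have t: "(1::'a) + 1 = -1" using two_eq by (simp add: one_add_one)
      have "Dt a (u+u) = (1+1)^3" unfolding True u1 Dt_def using e_ge3 by (simp add: power_0_left)
      also have "\<dots> = -1" unfolding t by simp
      finally show ?thesis by simp
    qed
    thus ?thesis using R1 by (intro conjI exI[of _ 0]) auto
  qed
qed

lemma Z_form:
  assumes hodd: "odd h" and u: "u = 0 \<or> u = 1" and au: "a \<noteq> 0 \<or> u = 1"
  shows "(card {y. Qf a u y = 0} = 3^(m-1) \<or> card {y. Qf a u y = 0} = 3^(m-1) + 2*3^(2*h-1)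
           \<or> card {y. Qf a u y = 0} + 2*3^(2*h-1) = 3^(m-1))
         \<and> (Dt a (u+u) \<noteq> 0 \<longrightarrow> card {y. Qf a u y = 0} = 3^(m-1))"
proof -
  obtain j where j: "j \<le> 2" "card {z. Lf a u z = 0} = e^j" using rad_info[OF u au] by blast
  note F = form_zeros[OF u j(2)]
  have c: "j = 0 \<or> j = 1 \<or> j = 2" using j(1) by auto
  have A: "card {y. Qf a u y = 0} = 3^(m-1) \<or> card {y. Qf a u y = 0} = 3^(m-1) + 2*3^(2*h-1)
           \<or> card {y. Qf a u y = 0} + 2*3^(2*h-1) = 3^(m-1)"
  proof -
    { assume "j = 0" hence "odd (m + h*j)" using hodd mh by simp
      hence ?thesis using F by simp }
    moreover
    { assume "j = 2" hence "odd (m + h*j)" using hodd mh by simp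
      hence ?thesis using F by simp }
    moreover
    { assume j1: "j = 1" hence "even (m + h*j)" using hodd mh by simp
      moreover have "(m + h*j) div 2 - 1 = 2*h - 1" using j1 mh by simp
      ultimately have ?thesis using F by simp }
    ultimately show ?thesis using c by blast
  qed
  have B: "card {y. Qf a u y = 0} = 3^(m-1)" if "Dt a (u+u) \<noteq> 0"
  proof -
    have "e^j = 1" using rad_info[OF u au] that j by simp
    hence "j = 0" using e_ge3 by simp
    hence "odd (m + h*j)" using hodd mh by simp
    thus ?thesis using F by simp
  qed
  show ?thesis using A B by blast
qed


lemma Dt_b0: assumes "b \<noteq> 0" shows "Dt b (0+0) \<noteq> 0"
proof -
  have "Dt b (0+0) = 2 * b * b^e * b^(e*e)" unfolding Dt_def by (simp add: power_0_left)
  also have "\<dots> = - (b * b^e * b^(e*e))" using two_eq by simp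
  finally show ?thesis using assms by simp
qed

lemma Dt_11: "Dt 1 (1+1) \<noteq> 0"
proof -
  have "Dt 1 (1+1) = 4" unfolding Dt_def by (simp add: power3_eq_cube)
  thus ?thesis using four_eq by simp
qed

lemma not_both:
  assumes hodd: "odd h" and D1: "Dt (1+b) (1+1) = 0" and D2: "Dt (1-b) (1+1) = 0"
  shows False
proof -
  define x where "x = b" define y where "y = b^e" define z where "z = b^(e*e)"
  have p1: "(1+b)^e = 1 + y" "(1+b)^(e*e) = 1 + z" unfolding y_def z_def by (simp_all add: sig_add sig2_add)
  have p2: "(1-b)^e = 1 - y" "(1-b)^(e*e) = 1 - z" unfolding y_def z_def
    using sig_add[of 1 "-b"] sig2_add[of 1 "-b"] sig_neg[of b] sig2_neg[of b] by simp_all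
  have E1: "(1+1)^3 - (1+1) * ((1+x)^2 + (1+y)^2 + (1+z)^2) + 2 * (1+x) * (1+y) * (1+z) = 0"
    using D1 unfolding Dt_def p1 x_def .
  have E2: "(1+1)^3 - (1+1) * ((1-x)^2 + (1-y)^2 + (1-z)^2) + 2 * (1-x) * (1-y) * (1-z) = 0"
    using D2 unfolding Dt_def p2 x_def .
  define t where "t = x + y + z"
  have "t^2 + 1 = - (((1+1)^3 - (1+1) * ((1+x)^2 + (1+y)^2 + (1+z)^2) + 2 * (1+x) * (1+y) * (1+z))
                   + ((1+1)^3 - (1+1) * ((1-x)^2 + (1-y)^2 + (1-z)^2) + 2 * (1-x) * (1-y) * (1-z)))
                 + 3 * (3 - (x^2+y^2+z^2) + 2*(x*y+y*z+x*z))"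
    unfolding t_def by (simp add: algebra_simps power2_eq_square power3_eq_cube)
  hence t2: "t^2 = -1" unfolding E1 E2 using three0 by (simp add: eq_neg_iff_add_eq_0)
  have tK: "t^e = t"
  proof -
    have "t^e = x^e + y^e + z^e" unfolding t_def by (simp add: sig_add)
    also have "x^e = y" unfolding x_def y_def ..
    also have "y^e = z" unfolding y_def z_def by (simp add: power_mult)
    also have "z^e = x" unfolding z_def x_def using fermat_e by (simp add: power_mult[symmetric])
    finally show ?thesis unfolding t_def by (simp add: ac_simps)
  qed
  have em: "e mod 4 = 3" unfolding eh by (rule e_mod4[OF hodd])
  define k where "k = e div 4"
  have k: "e = 2 * (2*k+1) + 1" using em unfolding k_def by presburger
  have "t^e = (t^2)^(2*k+1) * t" unfolding k by (simp only: power_add power_mult power_one_right)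
  also have "\<dots> = - t" unfolding t2 by simp
  finally have "t = - t" using tK by simp
  hence "t = 0" by (rule neg_self)
  thus False using t2 by simp
qed


lemma line_count:
  assumes "f1 \<in> P3" "f2 \<in> P3"
  shows "(if f2 = 0 then 1 else 0) + (if f1 = 0 then 1 else 0) + (if f1 + f2 = 0 then 1 else 0)
         + (if f1 - f2 = 0 then 1 else 0) = (1::nat) + (if f1 = 0 \<and> f2 = 0 then 3 else 0)"
proof -
  have m2: "-(2::'a) = 1" using two_eq by simp
  have n1: "(-1::'a) \<noteq> 0" by simp
  have n2: "(2::'a) \<noteq> 0" unfolding two_eq by simp
  have n3: "(-2::'a) \<noteq> 0" unfolding m2 by simp
  have n4: "(1::'a) \<noteq> -1" by (rule one_neq_m1)
  from P3_cases[OF assms(1)] P3_cases[OF assms(2)] show ?thesis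
    using n1 n2 n3 n4 by (elim disjE) (simp_all add: m2)
qed

lemma mainL:
  assumes hodd: "odd h" and b: "b \<noteq> 0"
  shows "card {y. Tr (y^(e+1) + y^2) = 0 \<and> Tr (b * y^(e+1)) = 0}
           \<in> {3^(m-2), 3^(m-2) + 2*3^(2*(h-1)), 3^(m-2) - 2*3^(2*(h-1))}"
proof -
  define F1 where "F1 y = Qf 1 1 y" for y
  define F2 where "F2 y = Qf b 0 y" for y
  have f1: "Tr (y^(e+1) + y^2) = F1 y" for y unfolding F1_def Qf_def by simp
  have f2: "Tr (b * y^(e+1)) = F2 y" for y unfolding F2_def Qf_def by simp
  have f3: "F1 y + F2 y = Qf (1+b) 1 y" for y
    unfolding F1_def F2_def Qf_def Tr_add[symmetric] by (simp add: algebra_simps)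
  have f4: "F1 y - F2 y = Qf (1-b) 1 y" for y
    unfolding F1_def F2_def Qf_def Tr_diff[symmetric] by (simp add: algebra_simps)
  define N where "N = card {y. F1 y = 0 \<and> F2 y = 0}"
  have sum: "card {y. F2 y = 0} + card {y. F1 y = 0} + card {y. Qf (1+b) 1 y = 0} + card {y. Qf (1-b) 1 y = 0}
             = 3^m + 3 * N"
  proof -
    have "card {y. F2 y = 0} + card {y. F1 y = 0} + card {y. Qf (1+b) 1 y = 0} + card {y. Qf (1-b) 1 y = 0}
        = (\<Sum>y\<in>UNIV. (if F2 y = 0 then 1 else 0) + (if F1 y = 0 then 1 else 0) + (if F1 y + F2 y = 0 then 1 else 0)
             + (if F1 y - F2 y = 0 then 1 else 0))"
      unfolding card_pred_sum f3[symmetric] f4[symmetric] by (simp add: sum.distrib)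
    also have "\<dots> = (\<Sum>y\<in>UNIV. (1::nat) + (if F1 y = 0 \<and> F2 y = 0 then 3 else 0))"
      by (rule sum.cong[OF refl], rule line_count) (simp_all add: F1_def F2_def Qval)
    also have "\<dots> = (\<Sum>y\<in>(UNIV::'a set). 1::nat) + (\<Sum>y\<in>UNIV. if F1 y = 0 \<and> F2 y = 0 then 3 else 0)"
      by (simp only: sum.distrib)
    also have "(\<Sum>y\<in>UNIV. if F1 y = 0 \<and> F2 y = 0 then 3 else 0) = 3 * (\<Sum>y\<in>(UNIV::'a set). if F1 y = 0 \<and> F2 y = 0 then 1 else (0::nat))"
      by (subst sum_distrib_left) (rule sum.cong; simp)
    also have "(\<Sum>y\<in>(UNIV::'a set). if F1 y = 0 \<and> F2 y = 0 then 1 else (0::nat)) = N"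
      unfolding N_def card_pred_sum[of "\<lambda>y. F1 y = 0 \<and> F2 y = 0"] ..
    also have "(\<Sum>y\<in>(UNIV::'a set). 1::nat) = card (UNIV::'a set)" by simp
    finally show ?thesis using card by simp
  qed
  have Z0: "card {y. F2 y = 0} = 3^(m-1)"
    using Z_form[OF hodd, of 0 b] Dt_b0[OF b] b unfolding F2_def by simp
  have Z1: "card {y. F1 y = 0} = 3^(m-1)"
    using Z_form[OF hodd, of 1 1] Dt_11 unfolding F1_def by simp
  note Z2 = Z_form[OF hodd, of 1 "1+b"] and Z3 = Z_form[OF hodd, of 1 "1-b"]
  have nb: "Dt (1+b) (1+1) \<noteq> 0 \<or> Dt (1-b) (1+1) \<noteq> 0" using not_both[OF hodd] by blast
  define A where "A = (3::nat)^(m-2)"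
  define B where "B = (3::nat)^(2*(h-1))"
  have m3: "m \<ge> 3" using mh hpos by simp
  have mm: "m - 1 = Suc (m - 2)" using m3 by simp
  have mm2: "m = Suc (Suc (m - 2))" using m3 by simp
  have hh: "2*h - 1 = Suc (2*(h-1))" using hpos by simp
  have A1: "(3::nat)^(m-1) = 3*A" unfolding A_def mm by simp
  have A0: "(3::nat)^m = 9*A" unfolding A_def by (subst mm2) simp
  have B1: "(3::nat)^(2*h-1) = 3*B" unfolding B_def hh by simp
  define z2 where "z2 = card {y. Qf (1+b) 1 y = 0}"
  define z3 where "z3 = card {y. Qf (1-b) 1 y = 0}"
  have c2: "z2 = 3*A \<or> z2 = 3*A + 6*B \<or> z2 + 6*B = 3*A" using Z2 unfolding z2_def A1 B1 by auto
  have c3: "z3 = 3*A \<or> z3 = 3*A + 6*B \<or> z3 + 6*B = 3*A" using Z3 unfolding z3_def A1 B1 by auto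
  have one: "z2 = 3*A \<or> z3 = 3*A" using nb Z2 Z3 unfolding z2_def z3_def A1 by auto
  have s: "6*A + z2 + z3 = 9*A + 3*N" using sum Z0 Z1 unfolding z2_def[symmetric] z3_def[symmetric] A1 A0 by simp
  have fin: "N = A \<or> N = A + 2*B \<or> N = A - 2*B" if zz: "z = 3*N" and cz: "z = 3*A \<or> z = 3*A + 6*B \<or> z + 6*B = 3*A" for z
  proof -
    from cz consider "z = 3*A" | "z = 3*A + 6*B" | "z + 6*B = 3*A" by blast
    thus ?thesis
    proof cases
      case 1 thus ?thesis using zz by linarith
    next
      case 2 thus ?thesis using zz by linarith
    next
      case 3 hence "N + 2*B = A" using zz by linarith
      thus ?thesis by linarith
    qed
  qed
  have "N = A \<or> N = A + 2*B \<or> N = A - 2*B"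
  proof (cases "z2 = 3*A")
    case True
    hence "z3 = 3*N" using s by linarith
    thus ?thesis using fin c3 by blast
  next
    case False
    hence "z3 = 3*A" using one by blast
    hence "z2 = 3*N" using s by linarith
    thus ?thesis using fin c2 by blast
  qed
  moreover have "card {y. Tr (y^(e+1) + y^2) = 0 \<and> Tr (b * y^(e+1)) = 0} = N" unfolding f1 f2 N_def ..
  ultimately show ?thesis unfolding A_def B_def by auto
qed
end

theorem mainTheorem14:
  fixes h m e :: nat and b :: "'a::{field,finite}"
  assumes "odd h" and "h > 0"
    and "m = 3 * h" and "e = 3 ^ h"
    and "card (UNIV :: 'a set) = 3 ^ m"
    and "b \<noteq> 0"
  shows "card {y :: 'a. abs_trace3 m (y ^ (e + 1) + y ^ 2) = 0 \<and> abs_trace3 m (b * y ^ (e + 1)) = 0}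
           \<in> {3 ^ (m - 2), 3 ^ (m - 2) + 2 * 3 ^ (2 * (h - 1)), 3 ^ (m - 2) - 2 * 3 ^ (2 * (h - 1))}"
proof -
  interpret G: gf3 h m e "TYPE('a)"
    by unfold_locales (use assms in auto)
  show ?thesis by (rule G.mainL[OF assms(1) assms(6)])
qed

end
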